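(* Let $f:\mathbb{T}\to\mathbb{R}$ and $\nu\ge0$. For all $t\in\mathbb{T}^\kappa$, $$({}_h\Delta_{\rho(b)}^{-\nu}f^{\Delta})(t-\nu h)=\frac{\nu}{\Gamma(\nu+1)}(b+\nu h-\sigma(t))_h^{(\nu-1)}f(b)+\bigl[\tau\mapsto({}_h\Delta_b^{-\nu}f)(\tau-\nu h)\bigr]^{\Delta}(t),$$ where on the left the right fractional $h$-sum with upper endpoint $\rho(b)=b-h$ is applied to $f^\Delta$ (a function on $\mathbb{T}^\kappa$).
   Context: Let $a\in\mathbb{R}$, $h>0$, $b=a+kh$ with $k\in\mathbb{N}$, $\mathbb{T}=\{a,a+h,\dots,b\}$, $\mathbb{T}^\kappa=\mathbb{T}\setminus\{b\}$, $\sigma(t)=t+h$, $\rho(t)=t-h$, $g^\Delta(t)=(g(t+h)-g(t))/h$. For $c\le d$ in $\{a+jh:j\in\mathbb{Z}\}$, $\int_c^dg(s)\Delta s:=h\sum_{j=0}^{(d-c)/h-1}g(c+jh)$. $h$-factorial: $x_h^{(y)}:=h^y\Gamma(\frac{x}{h}+1)/\Gamma(\frac{x}{h}+1-y)$ (division at a pole yields zero). For $\nu\ge0$, $c\in\mathbb{T}$ and $g$ defined on $\{s\in\mathbb{T}:s\le c\}$, the right fractional $h$-sum with upper endpoint $c$ (written at the shifted point) is, for $t\in\mathbb{T}$, $t\le c$: $({}_h\Delta_c^{-\nu}g)(t-\nu h):=h^\nu g(t)+\frac{\nu}{\Gamma(\nu+1)}\int_{\sigma(t)}^{\sigma(c)}(s+\nu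 h-\sigma(t))_h^{(\nu-1)}g(s)\Delta s.$ *)

theory Defs
  imports "HOL-Analysis.Analysis"
begin

text \<open>Time scale T = {a, a+h, ..., b} with b = a + k h; functions on T are
represented as functions real => real of which only the values on T matter.\<close>

definition hdelta :: "real \<Rightarrow> (real \<Rightarrow> real) \<Rightarrow> real \<Rightarrow> real" where
  "hdelta h g t = (g (t + h) - g t) / h"

text \<open>Delta integral from c to d (d - c a nonnegative multiple of h).\<close>
definition hint :: "real \<Rightarrow> real \<Rightarrow> real \<Rightarrow> (real \<Rightarrow> real) \<Rightarrow> real" where
  "hint h c d g = h * (\<Sum>j<nat (round ((d - c) / h)). g (c + real j * h))"

text \<open>h-factorial x_h^(y); division at a pole of Gamma yields zero.\<close>
definition hfact :: "real \<Rightarrow> real \<Rightarrow> real \<Rightarrow> real" where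
  "hfact h x y = (if x / h + 1 - y \<in> \<int>\<^sub>\<le>\<^sub>0 then 0
      else h powr y * Gamma (x / h + 1) / Gamma (x / h + 1 - y))"

text \<open>rfsum h nu c g t = (right fractional h-sum with upper endpoint c of g)(t - nu h).\<close>
definition rfsum :: "real \<Rightarrow> real \<Rightarrow> real \<Rightarrow> (real \<Rightarrow> real) \<Rightarrow> real \<Rightarrow> real" where
  "rfsum h \<nu> c g t = h powr \<nu> * g t
     + \<nu> / Gamma (\<nu> + 1) * hint h (t + h) (c + h) (\<lambda>s. hfact h (s + \<nu> * h - (t + h)) (\<nu> - 1) * g s)"

end

theory Submission
  imports Defs
begin

theorem mainTheorem8:
  fixes a h b \<nu> t :: real and k :: nat and f :: "real \<Rightarrow> real"
  assumes "h > 0" and "b = a + real k * h" and "\<nu> \<ge> 0"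
    and "t \<in> {a + real j * h | j. j < k}"
  shows "rfsum h \<nu> (b - h) (hdelta h f) t
       = \<nu> / Gamma (\<nu> + 1) * hfact h (b + \<nu> * h - (t + h)) (\<nu> - 1) * f b
         + hdelta h (\<lambda>\<tau>. rfsum h \<nu> b f \<tau>) t"
proof -
  obtain j where tj: "t = a + real j * h" and jk: "j < k" using assms(4) by auto
  define n where "n = k - j - 1"
  have rn: "real n = real k - real j - 1" using jk unfolding n_def by (simp add: of_nat_diff)
  have hb: "b = t + (real n + 1) * h" proof -
    have "real k = real n + real j + 1" using rn by simp
    then show ?thesis using assms(2) tj by (simp add: algebra_simps)
  qed
  have hp: "h \<noteq> 0" using assms(1) by simp
  have c1: "nat (round ((b - h + h - (t + h)) / h)) = n"
    using hp by (simp add: hb algebra_simps)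
  have c2: "nat (round ((b + h - (t + h + h)) / h)) = n"
    using hp by (simp add: hb algebra_simps)
  have c3: "nat (round ((b + h - (t + h)) / h)) = Suc n"
  proof -
    have "(b + h - (t + h)) / h = real (Suc n)" using hp by (simp add: hb field_simps)
    then show ?thesis by (simp only:) (metis nat_int round_of_nat)
  qed
  define g where "g i = hfact h (real i * h + \<nu> * h) (\<nu> - 1)" for i :: nat
  define C where "C = \<nu> / Gamma (\<nu> + 1)"
  have L: "rfsum h \<nu> (b - h) (hdelta h f) t = h powr \<nu> * hdelta h f t
      + C * (h * (\<Sum>i<n. g i * ((f (t + h + real i * h + h) - f (t + h + real i * h)) / h)))"
    unfolding rfsum_def hint_def c1 C_def g_def hdelta_def
    by (intro arg_cong2[where f="(+)"] refl arg_cong2[where f="(*)"] sum.cong)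
       (simp_all add: algebra_simps)
  have R1: "rfsum h \<nu> b f (t + h) = h powr \<nu> * f (t + h)
      + C * (h * (\<Sum>i<n. g i * f (t + h + real i * h + h)))"
    unfolding rfsum_def hint_def c2 C_def g_def
    by (intro arg_cong2[where f="(+)"] refl arg_cong2[where f="(*)"] sum.cong)
       (simp_all add: algebra_simps)
  have R0: "rfsum h \<nu> b f t = h powr \<nu> * f t
      + C * h * ((\<Sum>i<n. g i * f (t + h + real i * h)) + g n * f b)"
    unfolding rfsum_def hint_def c3 C_def g_def
    by (simp add: hb algebra_simps)
  have E: "hfact h (b + \<nu> * h - (t + h)) (\<nu> - 1) = g n"
    unfolding g_def by (simp add: hb algebra_simps)
  have S: "(\<Sum>i<n. g i * ((f (t + h + real i * h + h) - f (t + h + real i * h)) / h))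
     = ((\<Sum>i<n. g i * f (t + h + real i * h + h)) - (\<Sum>i<n. g i * f (t + h + real i * h))) / h"
    by (simp add: sum_subtractf[symmetric] sum_divide_distrib right_diff_distrib)
  show ?thesis
    unfolding L E hdelta_def[of h "\<lambda>\<tau>. rfsum h \<nu> b f \<tau>"] R1 R0 S C_def[symmetric]
    using hp by (simp add: hdelta_def field_simps)
qed

end
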